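(* Let $n=p_1^{\alpha_1}p_2^{\alpha_2}p_3^{\alpha_3}$, where $\alpha_1,\alpha_2,\alpha_3$ are positive integers and $p_1<p_2<p_3$ are primes. Let $i,j\in\{1,2,3\}$ with $i<j$. If $1\leq\beta_i\leq\alpha_i$ and $2\leq\beta_j\leq\alpha_j$, then $\deg(p_i^{\beta_i}p_j^{\beta_j})>\deg(p_i^{\beta_i-1}p_j^{\beta_j})$ in $\mathcal{P}(C_n)$.
   Context: For a finite group $G$, the power graph $\mathcal{P}(G)$ is the simple undirected graph with vertex set $G$ in which two distinct vertices are adjacent if one is an integral power of the other. $C_n$ denotes the cyclic group of order $n$, identified with $\mathbb{Z}_n=\{0,1,\ldots,n-1\}$, so a positive divisor $d$ of $n$ is regarded as the element $d\bmod n\in\mathbb{Z}_n$. $\deg(a)$ is the degree of vertex $a$ in $\mathcal{P}(C_n)$. *)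

theory Defs
  imports "HOL-Computational_Algebra.Primes"
begin

text \<open>Cyclic group C_n identified with Z_n = {0,...,n-1} (additive).
  b is an integral power of a iff b = k*a mod n for some integer k.\<close>

definition pg_adj :: "nat \<Rightarrow> nat \<Rightarrow> nat \<Rightarrow> bool" where
  "pg_adj n a b \<longleftrightarrow> a \<noteq> b \<and>
     ((\<exists>k::int. int b = (k * int a) mod int n) \<or> (\<exists>k::int. int a = (k * int b) mod int n))"

definition pg_deg :: "nat \<Rightarrow> nat \<Rightarrow> nat" where
  "pg_deg n a = card {b \<in> {0..<n}. pg_adj n a b}"

end

theory Submission
  imports Defs "HOL-Number_Theory.Number_Theory"
begin

lemma b1: fixes p q r :: int
 assumes "p\<ge>2" "q\<ge>p+1" "r\<ge>2" "r=2 \<Longrightarrow> q \<ge> p+2" "r\<ge>3 \<Longrightarrow> (q-2)*(r-2) \<ge> 2"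
 shows "(q-1)*(r-1)*(q+p) > p*q*r"
proof (cases "r=2")
  case True
  then have "q*(q-p-1) \<ge> q" using assms by (simp add: mult_left_mono[of 1 "q-p-1" q, simplified])
  then show ?thesis using True assms by (simp add: algebra_simps) 
next
  case False
  hence "r\<ge>3" using assms by simp
  hence h: "2*(q-1)*(r-1) \<ge> q*r" using assms(5) by (simp add: algebra_simps)
  have a: "(q-1)*(r-1)*(q+p) \<ge> (q-1)*(r-1)*(2*p+1)" using assms \<open>r\<ge>3\<close> by (intro mult_left_mono) auto
  have b: "(q-1)*(r-1)*(2*p+1) = (2*(q-1)*(r-1))*p + (q-1)*(r-1)" by (simp add: algebra_simps)
  have d: "(2*(q-1)*(r-1))*p \<ge> (q*r)*p" using h assms by (intro mult_right_mono) auto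
  have "(q-1)*(r-1) > 0" using assms \<open>r\<ge>3\<close> by simp
  moreover have "p*q*r = (q*r)*p" by simp
  ultimately show ?thesis using a b d by linarith
qed

lemma b2: fixes p q r :: int
 assumes "p\<ge>2" "q\<ge>p+1" "r\<ge>2" "r=2 \<Longrightarrow> q \<ge> p+2" "r\<ge>3 \<Longrightarrow> (q-2)*(r-2) \<ge> 2"
 shows "(q-1)*(r-1)*(q+p-1) + q*r > p*q*r"
proof (cases "r=2")
  case True
  then have "q*(q-p) \<ge> q" using assms by (simp add: mult_left_mono[of 1 "q-p" q, simplified])
  then show ?thesis using True assms by (simp add: algebra_simps) 
next
  case False
  hence "r\<ge>3" using assms by simp
  hence h: "2*(q-1)*(r-1) \<ge> q*r" using assms(5) by (simp add: algebra_simps)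
  have a: "(q-1)*(r-1)*(q+p-1) \<ge> (q-1)*(r-1)*(2*p)" using assms \<open>r\<ge>3\<close> by (intro mult_left_mono) auto
  have b: "(q-1)*(r-1)*(2*p) = (2*(q-1)*(r-1))*p" by (simp add: algebra_simps)
  have d: "(2*(q-1)*(r-1))*p \<ge> (q*r)*p" using h assms by (intro mult_right_mono) auto
  have "q*r > 0" using assms by simp
  moreover have "p*q*r = (q*r)*p" by simp
  ultimately show ?thesis using a b d by linarith
qed

lemma b3: fixes p q r :: int
 assumes "p\<ge>2" "q\<ge>p+1" "r\<ge>2" "r=2 \<Longrightarrow> q \<ge> p+2"
 shows "(p-1)*(q-1)*(r-1)+p*(p-1)*(r-1)+p*r > p*p*r"
proof -
  have "(q-1)*(r-1) > p"
  proof (cases "r=2")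
    case True then show ?thesis using assms by simp
  next
    case False
    hence "r-1 \<ge> 2" using assms by simp
    hence "(q-1)*(r-1) \<ge> p*2" using assms by (intro mult_mono) auto
    then show ?thesis using assms by simp
  qed
  hence "(p-1)*((q-1)*(r-1)) > (p-1)*p" using assms by (intro mult_strict_left_mono) auto
  then show ?thesis by (simp add: algebra_simps)
qed

lemma b4: fixes p q r :: int
 assumes "p\<ge>2" "q\<ge>p+1" "r\<ge>2"
 shows "(q-1)*(r-1)+(p-1)*(r-1)+r > p*r"
proof -
  have "(q-1)*(r-1) \<ge> p*1" using assms by (intro mult_mono) auto
  then show ?thesis by (simp add: algebra_simps)
qed


lemma tot_pp: "prime p \<Longrightarrow> totient (p ^ Suc k) = p^k * (p-1)"
  by (rule totient_prime_power_Suc)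

lemma tot3:
  assumes "prime P" "prime Q" "prime R" "P \<noteq> Q" "P \<noteq> R" "Q \<noteq> R"
  shows "totient (P^a*Q^b*R^c) = totient (P^a)*totient(Q^b)*totient(R^c)"
proof -
  have c1: "coprime (P^a) (Q^b)" using assms by (simp add: primes_coprime)
  have "coprime (P^a*Q^b) (R^c)" using assms by (simp add: primes_coprime)
  then show ?thesis using c1 by (simp add: totient_mult_coprime)
qed

lemma arith_main:
  assumes P: "prime P" and Q: "prime Q" and R: "prime R" and "P < Q" "R \<noteq> P" "R \<noteq> Q" "C \<ge> 1"
  shows "totient (P^e*Q^(Suc c)*R^C) + totient (P^(Suc e)*Q^c*R^C) + P^e*Q^c*R^C > P^(Suc e)*Q^c*R^C"
proof -
  have P2: "P \<ge> 2" "Q \<ge> 2" "R \<ge> 2" using P Q R prime_ge_2_nat by auto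
  have RC: "R^C = R^(C-1)*R" using \<open>C\<ge>1\<close> by (cases C) auto
  have tR: "totient (R^C) = R^(C-1)*(R-1)" using tot_pp[OF R, of "C-1"] \<open>C\<ge>1\<close> by (cases C) auto
  define p where "p = int P"
  define q where "q = int Q"
  define r where "r = int R"
  define z where "z = int (R^(C-1))"
  have z: "z > 0" using P2 by (simp add: z_def)
  have ip: "int (P-1) = p-1" "int (Q-1) = q-1" "int (R-1) = r-1" using P2 by (auto simp: p_def q_def r_def)
  have pq: "p \<ge> 2" "q \<ge> p+1" "r \<ge> 2" using P2 \<open>P<Q\<close> by (auto simp: p_def q_def r_def)
  have odd: "r = 2 \<Longrightarrow> q \<ge> p+2"
  proof -
    assume "r = 2"
    hence "R = 2" by (simp add: r_def)
    hence "P \<noteq> 2" "Q \<noteq> 2" using assms by auto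
    hence "odd P" "odd Q" using P Q P2 prime_odd_nat by (metis le_neq_implies_less)+
    hence "Q \<ge> P+2" using \<open>P<Q\<close> by presburger
    thus "q \<ge> p+2" by (simp add: p_def q_def)
  qed
  have qr: "r \<ge> 3 \<Longrightarrow> (q-2)*(r-2) \<ge> 2"
  proof -
    assume "r \<ge> 3"
    have "q \<ge> 3" using pq by simp
    have "q \<noteq> r" using assms by (simp add: q_def r_def)
    show "(q-2)*(r-2) \<ge> 2"
    proof (cases "q = 3")
      case True hence "r \<ge> 4" using \<open>q\<noteq>r\<close> \<open>r\<ge>3\<close> by simp
      thus ?thesis using True by simp
    next
      case False hence "q \<ge> 4" using \<open>q\<ge>3\<close> by simp
      hence "(q-2)*(r-2) \<ge> 2*1" using \<open>r\<ge>3\<close> by (intro mult_mono) auto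
      thus ?thesis by simp
    qed
  qed
  have tot: "totient (P^a*Q^b*R^C) = totient (P^a)*totient(Q^b)*(R^(C-1)*(R-1))" for a b
    using tot3[OF P Q R] assms tR by auto
  have PS: "int (P^Suc k) = p * int (P^k)" "int (Q^Suc k) = q * int (Q^k)" for k
    by (simp_all add: p_def q_def)
  have RC': "int (R^C) = z*r" using RC by (simp add: z_def r_def)
  note cv = of_nat_add of_nat_mult ip RC' PS p_def[symmetric] q_def[symmetric] r_def[symmetric]
  show ?thesis
  proof (cases e)
    case 0
    note e = 0
    show ?thesis
    proof (cases c)
      case 0
      have t1: "totient (P^e*Q^(Suc c)*R^C) = (Q-1)*(R^(C-1)*(R-1))"
        using tot[of e "Suc c"] e 0 tot_pp[OF Q, of 0] by simp
      have t2: "totient (P^(Suc e)*Q^c*R^C) = (P-1)*(R^(C-1)*(R-1))"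
        using tot[of "Suc e" c] e 0 tot_pp[OF P, of 0] by simp
      have "int (totient (P^e*Q^(Suc c)*R^C) + totient (P^(Suc e)*Q^c*R^C) + P^e*Q^c*R^C)
          = z*((q-1)*(r-1)+(p-1)*(r-1)+r)"
        unfolding t1 t2 cv z_def[symmetric] using e 0 RC' by (simp add: algebra_simps)
      moreover have "int (P^(Suc e)*Q^c*R^C) = z*(p*r)"
        unfolding cv using e 0 RC' by (simp add: algebra_simps)
      moreover have "z*((q-1)*(r-1)+(p-1)*(r-1)+r) > z*(p*r)"
        using b4[OF pq] z by (intro mult_strict_left_mono) auto
      ultimately show ?thesis by linarith
    next
      case (Suc c')
      define y where "y = int (Q^c')"
      have y: "y > 0" using P2 by (simp add: y_def)
      have t1: "totient (P^e*Q^(Suc c)*R^C) = (Q^(Suc c')*(Q-1))*(R^(C-1)*(R-1))"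
        using tot[of e "Suc c"] e Suc tot_pp[OF Q, of "Suc c'"] by simp
      have t2: "totient (P^(Suc e)*Q^c*R^C) = (P-1)*(Q^c'*(Q-1))*(R^(C-1)*(R-1))"
        using tot[of "Suc e" c] e Suc tot_pp[OF P, of 0] tot_pp[OF Q, of c'] by simp
      have "int (totient (P^e*Q^(Suc c)*R^C) + totient (P^(Suc e)*Q^c*R^C) + P^e*Q^c*R^C)
          = (y*z)*((q-1)*(r-1)*(q+p-1) + q*r)"
        unfolding t1 t2 cv z_def[symmetric] y_def[symmetric] using e Suc RC' by (simp add: algebra_simps y_def q_def)
      moreover have "int (P^(Suc e)*Q^c*R^C) = (y*z)*(p*q*r)"
        unfolding cv using e Suc RC' by (simp add: algebra_simps y_def q_def)
      moreover have "(y*z)*((q-1)*(r-1)*(q+p-1) + q*r) > (y*z)*(p*q*r)"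
        using b2[OF pq odd qr] z y by (intro mult_strict_left_mono) auto
      ultimately show ?thesis by linarith
    qed
  next
    case (Suc e')
    note e = Suc
    define x where "x = int (P^e')"
    have x: "x > 0" using P2 by (simp add: x_def)
    show ?thesis
    proof (cases c)
      case 0
      have t1: "totient (P^e*Q^(Suc c)*R^C) = (P^e'*(P-1))*(Q-1)*(R^(C-1)*(R-1))"
        using tot[of e "Suc c"] e 0 tot_pp[OF P, of e'] tot_pp[OF Q, of 0] by simp
      have t2: "totient (P^(Suc e)*Q^c*R^C) = (P^(Suc e')*(P-1))*(R^(C-1)*(R-1))"
        using tot[of "Suc e" c] e 0 tot_pp[OF P, of "Suc e'"] by simp
      have "int (totient (P^e*Q^(Suc c)*R^C) + totient (P^(Suc e)*Q^c*R^C) + P^e*Q^c*R^C)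
          = (x*z)*((p-1)*(q-1)*(r-1)+p*(p-1)*(r-1)+p*r)"
        unfolding t1 t2 cv z_def[symmetric] x_def[symmetric] using e 0 RC' by (simp add: algebra_simps x_def p_def)
      moreover have "int (P^(Suc e)*Q^c*R^C) = (x*z)*(p*p*r)"
        unfolding cv using e 0 RC' by (simp add: algebra_simps x_def p_def)
      moreover have "(x*z)*((p-1)*(q-1)*(r-1)+p*(p-1)*(r-1)+p*r) > (x*z)*(p*p*r)"
        using b3[OF pq odd] z x by (intro mult_strict_left_mono) auto
      ultimately show ?thesis by linarith
    next
      case (Suc c')
      define y where "y = int (Q^c')"
      have y: "y > 0" using P2 by (simp add: y_def)
      have t1: "totient (P^e*Q^(Suc c)*R^C) = (P^e'*(P-1))*(Q^(Suc c')*(Q-1))*(R^(C-1)*(R-1))"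
        using tot[of e "Suc c"] e Suc tot_pp[OF P, of e'] tot_pp[OF Q, of "Suc c'"] by simp
      have t2: "totient (P^(Suc e)*Q^c*R^C) = (P^(Suc e')*(P-1))*(Q^c'*(Q-1))*(R^(C-1)*(R-1))"
        using tot[of "Suc e" c] e Suc tot_pp[OF P, of "Suc e'"] tot_pp[OF Q, of c'] by simp
      have "int (totient (P^e*Q^(Suc c)*R^C) + totient (P^(Suc e)*Q^c*R^C) + P^e*Q^c*R^C)
          = (x*y*z)*((p-1)*(q-1)*(r-1)*(q+p) + p*q*r)"
        unfolding t1 t2 cv z_def[symmetric] x_def[symmetric] y_def[symmetric] using e Suc RC'
        by (simp add: algebra_simps x_def y_def q_def p_def)
      moreover have "int (P^(Suc e)*Q^c*R^C) = (x*y*z)*((p-1)*(p*q*r) + p*q*r)"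
        unfolding cv using e Suc RC' by (simp add: algebra_simps x_def y_def q_def p_def)
      moreover have "(p-1)*((q-1)*(r-1)*(q+p)) > (p-1)*(p*q*r)"
        using b1[OF pq odd qr] pq by (intro mult_strict_left_mono) auto
      hence "(x*y*z)*((p-1)*(q-1)*(r-1)*(q+p) + p*q*r) > (x*y*z)*((p-1)*(p*q*r) + p*q*r)"
        using z x y by (intro mult_strict_left_mono) (auto simp: algebra_simps)
      ultimately show ?thesis by linarith
    qed
  qed
qed


lemma mem_iff:
  assumes "n > 0" "b < n"
  shows "(\<exists>k::int. int b = (k * int a) mod int n) \<longleftrightarrow> gcd a n dvd b"
proof
  assume "\<exists>k::int. int b = (k * int a) mod int n"
  then obtain k where k: "int b = (k * int a) mod int n" by blast
  have "gcd (int a) (int n) dvd (k * int a) mod int n"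
    by (intro dvd_mod) auto
  hence "int (gcd a n) dvd int b" using k by simp
  thus "gcd a n dvd b" by simp
next
  assume "gcd a n dvd b"
  then obtain t where t: "b = gcd a n * t" by blast
  obtain u v where uv: "int (gcd a n) = u * int a + v * int n"
    using bezw_aux by blast
  have "(int t * u * int a) mod int n = (int t * (u * int a + v * int n)) mod int n"
  proof -
    have "int t * (u * int a + v * int n) = int t * u * int a + (int t * v) * int n"
      by (simp add: algebra_simps)
    thus ?thesis by simp
  qed
  also have "... = int b mod int n" using uv t by (simp add: mult.commute)
  also have "... = int b" using assms by simp
  finally show "\<exists>k::int. int b = (k * int a) mod int n" by metis
qed

lemma adj_iff:
  assumes "n > 0" "a < n" "b < n"
  shows "pg_adj n a b \<longleftrightarrow> a \<noteq> b \<and> (gcd a n dvd gcd b n \<or> gcd b n dvd gcd a n)"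
proof -
  have "gcd a n dvd b \<longleftrightarrow> gcd a n dvd gcd b n" by simp
  moreover have "gcd b n dvd a \<longleftrightarrow> gcd b n dvd gcd a n" by simp
  ultimately show ?thesis unfolding pg_adj_def using mem_iff[OF assms(1,3), of a] mem_iff[OF assms(1,2), of b]
    by blast
qed

definition SS :: "nat \<Rightarrow> nat \<Rightarrow> nat set" where
  "SS n g = {b \<in> {0<..n}. g dvd gcd b n \<or> gcd b n dvd g}"

lemma shift_card:
  fixes n :: nat
  assumes "n > 0"
  shows "card {b \<in> {0..<n}. Pr (gcd b n)} = card {b \<in> {0<..n}. Pr (gcd b n)}"
proof (rule bij_betw_same_card[of "\<lambda>b. if b = 0 then n else b"])
  show "bij_betw (\<lambda>b. if b = 0 then n else b) {b \<in> {0..<n}. Pr (gcd b n)} {b \<in> {0<..n}. Pr (gcd b n)}"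
    unfolding bij_betw_def
  proof
    show "inj_on (\<lambda>b. if b = 0 then n else b) {b \<in> {0..<n}. Pr (gcd b n)}"
      unfolding inj_on_def
    proof (intro ballI impI)
      fix x y assume "x \<in> {b \<in> {0..<n}. Pr (gcd b n)}" "y \<in> {b \<in> {0..<n}. Pr (gcd b n)}"
        "(if x = 0 then n else x) = (if y = 0 then n else y)"
      then show "x = y" by (cases "x = 0"; cases "y = 0") auto
    qed
    show "(\<lambda>b. if b = 0 then n else b) ` {b \<in> {0..<n}. Pr (gcd b n)} = {b \<in> {0<..n}. Pr (gcd b n)}"
    proof (intro equalityI subsetI)
      fix x assume "x \<in> (\<lambda>b. if b = 0 then n else b) ` {b \<in> {0..<n}. Pr (gcd b n)}"
      then show "x \<in> {b \<in> {0<..n}. Pr (gcd b n)}" using assms by (auto split: if_splits)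
    next
      fix x assume x: "x \<in> {b \<in> {0<..n}. Pr (gcd b n)}"
      show "x \<in> (\<lambda>b. if b = 0 then n else b) ` {b \<in> {0..<n}. Pr (gcd b n)}"
      proof (cases "x = n")
        case True
        then show ?thesis using x assms by (auto intro!: image_eqI[of _ _ 0])
      next
        case False
        then show ?thesis using x by (auto intro!: image_eqI[of _ _ x])
      qed
    qed
  qed
qed

lemma deg_SS:
  assumes "n > 0" "a < n"
  shows "pg_deg n a = card (SS n (gcd a n)) - 1"
proof -
  have e1: "{b \<in> {0..<n}. pg_adj n a b} = {b \<in> {0..<n}. gcd a n dvd gcd b n \<or> gcd b n dvd gcd a n} - {a}"
    using adj_iff[OF assms(1,2)] by (auto simp: adj_iff[OF assms(1,2)])
  have fin: "finite {b \<in> {0..<n}. gcd a n dvd gcd b n \<or> gcd b n dvd gcd a n}" by simp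
  have mem: "a \<in> {b \<in> {0..<n}. gcd a n dvd gcd b n \<or> gcd b n dvd gcd a n}" using assms by simp
  have "pg_deg n a = card {b \<in> {0..<n}. gcd a n dvd gcd b n \<or> gcd b n dvd gcd a n} - 1"
    unfolding pg_deg_def e1 using card_Diff_singleton[OF mem] .
  also have "... = card (SS n (gcd a n)) - 1"
    unfolding SS_def using shift_card[OF assms(1), of "\<lambda>g. gcd a n dvd g \<or> g dvd gcd a n"] by simp
  finally show ?thesis .
qed

lemma card_mult:
  fixes n d :: nat
  assumes "n > 0" "d dvd n"
  shows "card {b \<in> {0<..n}. d dvd b} = n div d"
proof -
  have d: "d > 0" using assms by (auto intro: Nat.gr0I)
  have le: "k \<le> n div d \<longleftrightarrow> k * d \<le> n" for k
    using less_eq_div_iff_mult_less_eq[OF d] .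
  have eq: "{b \<in> {0<..n}. d dvd b} = (\<lambda>k. k * d) ` {0<..n div d}"
  proof (intro equalityI subsetI)
    fix b assume b: "b \<in> {b \<in> {0<..n}. d dvd b}"
    hence "d dvd b" by simp
    then obtain k where "b = d * k" by (rule dvdE)
    hence k: "b = k * d" by simp
    have k0: "0 < k" using b k by simp
    have "k * d \<le> n" using b k by simp
    hence "k \<le> n div d" by (rule le[THEN iffD2])
    hence "k \<in> {0<..n div d}" using k0 by simp
    thus "b \<in> (\<lambda>k. k * d) ` {0<..n div d}" unfolding k by (rule imageI)
  next
    fix b assume "b \<in> (\<lambda>k. k * d) ` {0<..n div d}"
    then obtain k where k1: "b = k*d" and k2: "k \<in> {0<..n div d}" by (rule imageE)
    have k: "b = k*d" "0<k" "k \<le> n div d" using k1 k2 by simp_all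
    have "k*d \<le> n" using k(3) by (rule le[THEN iffD1])
    moreover have "0 < k*d" using k(2) d by simp
    ultimately show "b \<in> {b \<in> {0<..n}. d dvd b}" using k(1) by simp
  qed
  have inj: "inj_on (\<lambda>k. k * d) {0<..n div d}" using d by (simp add: inj_on_def)
  show ?thesis unfolding eq using card_image[OF inj] by simp
qed

lemma nat_aux: "(a::nat) \<le> x - (y+z) \<Longrightarrow> t \<le> b \<Longrightarrow> x < t+z+y \<Longrightarrow> 0<t \<Longrightarrow> a<b"
  by linarith

lemma SS_compare:
  assumes n: "n > 0" and HG: "G = P * H" "P > 1" "H dvd n" "G dvd n" "G' dvd n"
    and G'G: "G' dvd G" and nGH: "\<not> H dvd G'" "\<not> G' dvd H"
    and ineq: "totient (n div G') + totient (n div H) + n div G > n div H"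
  shows "card (SS n H) < card (SS n G)"
proof -
  let ?U = "{0<..n}"
  have H0: "H > 0" using HG n by (auto intro: Nat.gr0I)
  have nGH2: "\<not> G dvd H" using HG H0 by auto
  have fin: "finite (SS n g)" for g unfolding SS_def by auto
  have A: "SS n H - SS n G \<subseteq> {b\<in>?U. H dvd b} - ({b\<in>?U. G dvd b} \<union> {b\<in>?U. gcd b n = H})"
  proof
    fix b assume b: "b \<in> SS n H - SS n G"
    hence "H dvd gcd b n" unfolding SS_def using HG(1) by (auto intro: dvd_trans)
    moreover have "\<not> G dvd b" using b HG unfolding SS_def by auto
    moreover have "gcd b n \<noteq> H" using b HG unfolding SS_def by auto
    ultimately show "b \<in> {b\<in>?U. H dvd b} - ({b\<in>?U. G dvd b} \<union> {b\<in>?U. gcd b n = H})"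
      using b unfolding SS_def by auto
  qed
  have sub: "{b\<in>?U. G dvd b} \<union> {b\<in>?U. gcd b n = H} \<subseteq> {b\<in>?U. H dvd b}"
    using HG by auto
  have disj: "{b\<in>?U. G dvd b} \<inter> {b\<in>?U. gcd b n = H} = {}"
  proof -
    { fix b assume "G dvd b" "gcd b n = H"
      hence "G dvd H" using HG by (metis gcd_greatest) 
      hence False using nGH2 by simp }
    thus ?thesis by auto
  qed
  have "card (SS n H - SS n G) \<le> card ({b\<in>?U. H dvd b} - ({b\<in>?U. G dvd b} \<union> {b\<in>?U. gcd b n = H}))"
    using A by (intro card_mono) auto
  also have "... = n div H - (n div G + totient (n div H))"
    using sub disj card_mult[OF n HG(3)] card_mult[OF n HG(4)] card_gcd_eq_totient[OF n HG(3)]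
    by (subst card_Diff_subset) (auto simp: card_Un_disjoint)
  finally have c1: "card (SS n H - SS n G) \<le> n div H - (n div G + totient (n div H))" .
  have B: "{b\<in>?U. gcd b n = G'} \<subseteq> SS n G - SS n H"
    using G'G nGH unfolding SS_def by auto
  have c2: "totient (n div G') \<le> card (SS n G - SS n H)"
    using card_mono[OF _ B] card_gcd_eq_totient[OF n HG(5)] fin by (simp add: finite_Diff)
  have "card (SS n H) = card (SS n H \<inter> SS n G) + card (SS n H - SS n G)"
    by (rule card_Int_Diff[OF fin])
  moreover have "card (SS n G) = card (SS n G \<inter> SS n H) + card (SS n G - SS n H)"
    by (rule card_Int_Diff[OF fin])
  moreover have tpos: "totient (n div G') > 0"
  proof -
    have "G' > 0" using n HG(5) by (auto intro: Nat.gr0I)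
    moreover have "G' \<le> n" using n HG(5) by (simp add: dvd_imp_le)
    ultimately show ?thesis by (simp add: div_greater_zero_iff)
  qed
  moreover have "card (SS n H - SS n G) < card (SS n G - SS n H)"
    using nat_aux[OF c1 c2 ineq tpos] .
  moreover have "card (SS n H \<inter> SS n G) = card (SS n G \<inter> SS n H)" by (simp add: Int_commute)
  ultimately show ?thesis by linarith
qed



lemma ndvd_pow:
  fixes P Q :: nat
  assumes "prime P" "prime Q" "P \<noteq> Q" "k \<ge> 1"
  shows "\<not> P^k dvd P^(k-1) * Q^l"
proof
  assume "P^k dvd P^(k-1) * Q^l"
  moreover have "coprime (P^k) (Q^l)" using primes_coprime[OF assms(1,2,3)] by simp
  ultimately have "P^k dvd P^(k-1)" using coprime_dvd_mult_left_iff by blast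
  hence "P^k \<le> P^(k-1)" by (rule dvd_imp_le) (use assms prime_gt_0_nat in auto)
  moreover have "P^(k-1) < P^k" using assms prime_gt_1_nat by (intro power_strict_increasing) auto
  ultimately show False by simp
qed

lemma core:
  assumes P: "prime P" and Q: "prime Q" and R: "prime R" and PQ: "P < Q" "R \<noteq> P" "R \<noteq> Q" "C \<ge> 1"
    and b: "1 \<le> bi" "bi \<le> A" "1 \<le> bj" "bj \<le> B" and n: "n = P^A*Q^B*R^C"
  shows "pg_deg n ((P^bi*Q^bj) mod n) > pg_deg n ((P^(bi-1)*Q^bj) mod n)"
proof -
  define e where "e = A - bi"
  define c where "c = B - bj"
  have P0: "P > 0" "Q > 0" "R > 0" using P Q R prime_gt_0_nat by auto
  have n0: "n > 0" using n P0 by simp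
  define G where "G = P^bi*Q^bj"
  define H where "H = P^(bi-1)*Q^bj"
  define G' where "G' = P^bi*Q^(bj-1)"
  have s1: "bi + e = A" "(bi-1) + Suc e = A" "bj + c = B" "(bj-1) + Suc c = B"
    using b by (simp_all add: e_def c_def)
  have A: "P^A = P^bi * P^e" using s1 by (metis power_add)
  have A': "P^A = P^(bi-1) * P^(Suc e)" using s1 by (metis power_add)
  have B: "Q^B = Q^bj * Q^c" using s1 by (metis power_add)
  have B': "Q^B = Q^(bj-1) * Q^(Suc c)" using s1 by (metis power_add)
  have nG: "n = G * (P^e*Q^c*R^C)" unfolding n G_def A B by (simp add: ac_simps)
  have nH: "n = H * (P^(Suc e)*Q^c*R^C)" unfolding n H_def A' B by (simp add: ac_simps)
  have nG': "n = G' * (P^e*Q^(Suc c)*R^C)" unfolding n G'_def A B' by (simp add: ac_simps)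
  have Gp: "G > 0" "H > 0" "G' > 0" using P0 by (simp_all add: G_def H_def G'_def)
  have dG: "G dvd n" "H dvd n" "G' dvd n" using nG nH nG' by (metis dvd_triv_left)+
  have d1: "n div G = P^e*Q^c*R^C" using Gp by (subst nG) simp
  have d2: "n div H = P^(Suc e)*Q^c*R^C" using Gp by (subst nH) simp
  have d3: "n div G' = P^e*Q^(Suc c)*R^C" using Gp by (subst nG') simp
  note divs = d1 d2 d3
  have gG: "gcd (G mod n) n = G" using dG(1) by (metis gcd.commute gcd_nat.absorb1 gcd_red_nat)
  have gH: "gcd (H mod n) n = H" using dG(2) by (metis gcd.commute gcd_nat.absorb1 gcd_red_nat)
  have "card (SS n H) < card (SS n G)"
  proof (rule SS_compare[OF n0 _ _ dG(2) dG(1) dG(3)])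
    show "G = P * H" unfolding G_def H_def using b by (cases bi) auto
    show "P > 1" using P prime_gt_1_nat by auto
    show "G' dvd G" unfolding G'_def G_def by (intro mult_dvd_mono) (auto intro: le_imp_power_dvd)
    show "\<not> H dvd G'" unfolding H_def G'_def
    proof
      assume "P ^ (bi - 1) * Q ^ bj dvd P ^ bi * Q ^ (bj - 1)"
      hence "Q^bj dvd P^bi * Q^(bj-1)" by (rule dvd_mult_right)
      hence "Q^bj dvd Q^(bj-1) * P^bi" by (simp add: mult.commute)
      moreover have "\<not> Q^bj dvd Q^(bj-1) * P^bi" using ndvd_pow[OF Q P _ b(3), of bi] PQ by simp
      ultimately show False by contradiction
    qed
    show "\<not> G' dvd H" unfolding H_def G'_def
    proof
      assume "P ^ bi * Q ^ (bj - 1) dvd P ^ (bi - 1) * Q ^ bj"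
      hence "P^bi dvd P^(bi-1) * Q^bj" by (rule dvd_mult_left)
      moreover have "\<not> P^bi dvd P^(bi-1) * Q^bj" using ndvd_pow[OF P Q _ b(1), of bj] PQ by simp
      ultimately show False by contradiction
    qed
    show "totient (n div G') + totient (n div H) + n div G > n div H"
      unfolding divs using arith_main[OF P Q R PQ] by simp
  qed
  moreover have "card (SS n H) \<ge> 1"
  proof -
    have "H dvd gcd n n" using dG(2) by simp
    hence "n \<in> SS n H" using n0 unfolding SS_def by simp
    moreover have "finite (SS n H)" unfolding SS_def by auto
    ultimately show ?thesis by (metis One_nat_def Suc_leI card_gt_0_iff empty_iff)
  qed
  ultimately have "card (SS n H) - 1 < card (SS n G) - 1" by linarith
  thus ?thesis
    using deg_SS[OF n0, of "G mod n"] deg_SS[OF n0, of "H mod n"] n0 gG gH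
    unfolding G_def H_def by simp
qed

theorem lemma5p1:
  fixes p \<alpha> :: "nat \<Rightarrow> nat" and n i j bi bj :: nat
  assumes "prime (p 1)" "prime (p 2)" "prime (p 3)"
    and "p 1 < p 2" "p 2 < p 3"
    and "\<alpha> 1 \<ge> 1" "\<alpha> 2 \<ge> 1" "\<alpha> 3 \<ge> 1"
    and "n = p 1 ^ \<alpha> 1 * p 2 ^ \<alpha> 2 * p 3 ^ \<alpha> 3"
    and "i \<in> {1,2,3}" "j \<in> {1,2,3}" "i < j"
    and "1 \<le> bi" "bi \<le> \<alpha> i" "2 \<le> bj" "bj \<le> \<alpha> j"
  shows "pg_deg n ((p i ^ bi * p j ^ bj) mod n) > pg_deg n ((p i ^ (bi - 1) * p j ^ bj) mod n)"
proof -
  have ij: "(i = 1 \<and> j = 2) \<or> (i = 1 \<and> j = 3) \<or> (i = 2 \<and> j = 3)" using assms(10-12) by auto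
  have bj1: "1 \<le> bj" using assms(15) by simp
  from ij show ?thesis
  proof (elim disjE conjE)
    assume ij: "i = 1" "j = 2"
    have "pg_deg n ((p 1 ^ bi * p 2 ^ bj) mod n) > pg_deg n ((p 1 ^ (bi-1) * p 2 ^ bj) mod n)"
      by (rule core[OF assms(1,2,3,4) _ _ assms(8,13) _ bj1 _ assms(9)]) (use assms ij in auto)
    then show ?thesis using ij by simp
  next
    assume ij: "i = 1" "j = 3"
    have nn: "n = p 1 ^ \<alpha> 1 * p 3 ^ \<alpha> 3 * p 2 ^ \<alpha> 2" using assms(9) by (simp add: mult.assoc mult.commute mult.left_commute)
    have "pg_deg n ((p 1 ^ bi * p 3 ^ bj) mod n) > pg_deg n ((p 1 ^ (bi-1) * p 3 ^ bj) mod n)"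
      by (rule core[OF assms(1,3,2) _ _ _ assms(7,13) _ bj1 _ nn]) (use assms ij in auto)
    then show ?thesis using ij by simp
  next
    assume ij: "i = 2" "j = 3"
    have nn: "n = p 2 ^ \<alpha> 2 * p 3 ^ \<alpha> 3 * p 1 ^ \<alpha> 1" using assms(9) by (simp add: mult.assoc mult.commute mult.left_commute)
    have "pg_deg n ((p 2 ^ bi * p 3 ^ bj) mod n) > pg_deg n ((p 2 ^ (bi-1) * p 3 ^ bj) mod n)"
      by (rule core[OF assms(2,3,1,5) _ _ assms(6,13) _ bj1 _ nn]) (use assms ij in auto)
    then show ?thesis using ij by simp
  qed
qed
end
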